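(* Let $n,m\in\mathbb N$, $d:=\min\{n,m\}$, $\alpha\in[1,d]$, and $\mathcal S_\alpha:=\{xx^\ast:x\in\mathcal V_\alpha\}$. Then $\mathsf K_\alpha=\mathrm{cone}(\mathcal S_\alpha)$, i.e. the convex cone generated by $\mathcal S_\alpha$ is already closed.
   Context: For $\psi=\sum_{i,j}a_{ij}e_i\otimes f_j\in\mathbb C^n\otimes\mathbb C^m$, its Schmidt coefficients $s_1(\psi)\ge\dots\ge s_d(\psi)\ge0$ are the singular values of $[a_{ij}]$. For $\alpha\in[1,d]$ with $k=\lfloor\alpha\rfloor$, $\theta=\alpha-k$, $r=\lceil\alpha\rceil$, a unit vector $\psi$ is $\alpha$-admissible if $s_j(\psi)=0$ for $j\ge r+1$ and, when $\theta>0$, $s_{k+1}(\psi)\le\frac\theta k\sum_{j=1}^ks_j(\psi)$; $\mathcal V_\alpha$ is the set of these. $\mathrm{cone}(S)$ denotes the set of finite nonnegative combinations of elements of $S$, and $\mathsf K_\alpha$ is defined as the closure of $\mathrm{cone}(\mathcal S_\alpha)$. *)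

theory Defs
  imports "HOL-Analysis.Analysis" "HOL-Computational_Algebra.Polynomial"
begin

text \<open>A vector psi in C^n (x) C^m is represented by its coefficient matrix
  [a_ij], an element of complex^'m^'n (rows indexed by 'n, columns by 'm);
  n = CARD('n), m = CARD('m).  The Hilbert-space norm of psi is the
  Frobenius norm, which is the norm of this type.\<close>

definition conj_transpose :: "complex^'m^'n \<Rightarrow> complex^'n^'m" where
  "conj_transpose A = (\<chi> i j. cnj (A $ j $ i))"

definition char_polyc :: "complex^'n^'n \<Rightarrow> complex poly" where
  "char_polyc M = det (\<chi> i j. (if i = j then [:0, 1:] else 0) - [:M $ i $ j:])"

definition eigvals_mset :: "complex^'n^'n \<Rightarrow> complex multiset" where
  "eigvals_mset M = proots (char_polyc M)"

text \<open>Schmidt coefficients s_1 >= ... >= s_d of psi, d = min n m: the singular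
  values of the coefficient matrix A, i.e. the square roots of the d largest
  eigenvalues (with multiplicity) of the positive semidefinite matrix A A^*.\<close>
definition schmidt_coeffs :: "complex^('m::finite)^('n::finite) \<Rightarrow> real list" where
  "schmidt_coeffs A =
     map sqrt (take (min CARD('n) CARD('m))
       (rev (sorted_list_of_multiset (image_mset Re (eigvals_mset (A ** conj_transpose A))))))"

definition schmidt :: "complex^('m::finite)^('n::finite) \<Rightarrow> nat \<Rightarrow> real" where
  "schmidt A j = schmidt_coeffs A ! (j - 1)"

definition admissible :: "real \<Rightarrow> complex^('m::finite)^('n::finite) \<Rightarrow> bool" where
  "admissible \<alpha> A \<longleftrightarrow>
     (let k = nat \<lfloor>\<alpha>\<rfloor>; \<theta> = \<alpha> - real k; r = nat \<lceil>\<alpha>\<rceil>; d = min CARD('n) CARD('m) in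
      norm A = 1 \<and>
      (\<forall>j. r + 1 \<le> j \<and> j \<le> d \<longrightarrow> schmidt A j = 0) \<and>
      (\<theta> > 0 \<longrightarrow> schmidt A (k + 1) \<le> \<theta> / real k * (\<Sum>j = 1..k. schmidt A j)))"

definition V_set :: "real \<Rightarrow> (complex^('m::finite)^('n::finite)) set" where
  "V_set \<alpha> = {A. admissible \<alpha> A}"

definition outer :: "complex^('m::finite)^('n::finite) \<Rightarrow> complex^('n \<times> 'm)^('n \<times> 'm)" where
  "outer A = (\<chi> p q. A $ fst p $ snd p * cnj (A $ fst q $ snd q))"

definition S_set :: "real \<Rightarrow> 'n itself \<Rightarrow> 'm itself \<Rightarrow> (complex^('n::finite \<times> 'm::finite)^('n \<times> 'm)) set" where
  "S_set \<alpha> _ _ = {outer x | x :: complex^'m^'n. x \<in> V_set \<alpha>}"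

definition cone_gen :: "'a::real_vector set \<Rightarrow> 'a set" where
  "cone_gen S = {x. \<exists>F c. finite F \<and> F \<subseteq> S \<and> (\<forall>v\<in>F. c v \<ge> 0) \<and> x = (\<Sum>v\<in>F. c v *\<^sub>R v)}"

definition K_set :: "real \<Rightarrow> 'n itself \<Rightarrow> 'm itself \<Rightarrow> (complex^('n::finite \<times> 'm::finite)^('n \<times> 'm)) set" where
  "K_set \<alpha> tn tm = closure (cone_gen (S_set \<alpha> tn tm))"

end

theory Submission
  imports Defs "HOL-Computational_Algebra.Fundamental_Theorem_Algebra"
begin

lemma poly_char:
  "poly (char_polyc (M::complex^'n::finite^'n)) z = det (\<chi> i j. (if i = j then z else 0) - M$i$j)"
  unfolding char_polyc_def det_def
  by (simp add: poly_sum poly_prod, intro sum.cong prod.cong refl arg_cong2[where f="(*)"]) auto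

lemma char_monic:
  fixes M :: "complex^'n::finite^'n"
  shows "degree (char_polyc M) = CARD('n) \<and> lead_coeff (char_polyc M) = 1"
proof -
  define P where "P = (\<lambda>i j. (if i = j then [:0, 1:] else 0) - [:M $ i $ j:])"
  define T where "T = (\<lambda>p. of_int (sign p) * (\<Prod>i\<in>UNIV. P i (p i)) :: complex poly)"
  have cp: "char_polyc M = (\<Sum>p\<in>{p. p permutes (UNIV::'n set)}. T p)"
    unfolding char_polyc_def det_def T_def P_def by simp
  have fin: "finite {p. p permutes (UNIV::'n set)}" by (simp add: finite_permutations)
  have idin: "id \<in> {p. p permutes (UNIV::'n set)}" by (simp add: permutes_id)
  have split: "char_polyc M = T id + (\<Sum>p\<in>{p. p permutes (UNIV::'n set)} - {id}. T p)"
    unfolding cp using fin idin by (simp add: sum.remove)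
  have Pid: "P i i = [:- M$i$i, 1:]" for i unfolding P_def by simp
  have Tid: "T id = (\<Prod>i\<in>UNIV. [:- M$i$i, 1:])"
    unfolding T_def by (simp add: sign_id Pid)
  have dTid: "degree (T id) = CARD('n)"
    unfolding Tid by (subst degree_prod_eq_sum_degree) auto
  have lTid: "lead_coeff (T id) = 1"
    unfolding Tid by (simp add: lead_coeff_prod)
  have dT: "degree (T p) < CARD('n)" if "p permutes (UNIV::'n set)" "p \<noteq> id" for p
  proof -
    obtain i0 where i0: "p i0 \<noteq> i0" using \<open>p \<noteq> id\<close> by (metis eq_id_iff)
    have "degree (T p) \<le> degree (\<Prod>i\<in>UNIV. P i (p i))"
      unfolding T_def by (rule order_trans[OF degree_mult_le]) simp
    also have "\<dots> \<le> (\<Sum>i\<in>UNIV. degree (P i (p i)))"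
      using degree_prod_sum_le[of UNIV "\<lambda>i. P i (p i)"] by (simp add: o_def)
    also have "\<dots> < (\<Sum>i\<in>(UNIV::'n set). 1)"
    proof (rule sum_strict_mono_ex1)
      show "\<forall>i\<in>UNIV. degree (P i (p i)) \<le> 1" unfolding P_def by auto
      show "\<exists>i\<in>UNIV. degree (P i (p i)) < 1" using i0 unfolding P_def
        by (intro bexI[of _ i0]) (auto)
    qed simp
    finally show ?thesis by simp
  qed
  have dR: "degree (\<Sum>p\<in>{p. p permutes (UNIV::'n set)} - {id}. T p) < CARD('n)"
  proof (cases "CARD('n) = 0")
    case True then show ?thesis by simp
  next
    case False
    have "degree (\<Sum>p\<in>{p. p permutes (UNIV::'n set)} - {id}. T p) \<le> CARD('n) - 1"
    proof (rule degree_sum_le)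
      fix p assume "p \<in> {p. p permutes (UNIV::'n set)} - {id}"
      then have "degree (T p) < CARD('n)" using dT by auto
      then show "degree (T p) \<le> CARD('n) - 1" by linarith
    qed (use fin in auto)
    then show ?thesis using False by linarith
  qed
  define R where "R = (\<Sum>p\<in>{p. p permutes (UNIV::'n set)} - {id}. T p)"
  have dR': "degree R < degree (T id)" using dR dTid unfolding R_def by simp
  have "degree (T id + R) = CARD('n)" using degree_add_eq_left[OF dR'] dTid by simp
  moreover have "lead_coeff (T id + R) = 1"
    using lead_coeff_add_le[OF dR'] lTid by (simp add: add.commute)
  ultimately show ?thesis unfolding split R_def by simp
qed

lemma det_zero_kernel:
  fixes B :: "complex^'n::finite^'n"
  assumes "det B = 0" shows "\<exists>v. v \<noteq> 0 \<and> B *v v = 0"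
proof -
  have "\<not> invertible B" using assms invertible_det_nz by blast
  then have "\<not> (\<exists>C::complex^'n^'n. C ** B = mat 1)" using invertible_left_inverse by blast
  then show ?thesis using matrix_left_invertible_ker[of B] by blast
qed

lemma eig_real:
  fixes A :: "complex^'m::finite^'n::finite"
  assumes "poly (char_polyc (A ** conj_transpose A)) z = 0"
  shows "Im z = 0"
proof -
  define H where "H = A ** conj_transpose A"
  have "det (\<chi> i j. (if i = j then z else 0) - H$i$j) = 0" using assms unfolding H_def poly_char .
  then obtain v where v: "v \<noteq> 0" and kv: "(\<chi> i j. (if i = j then z else 0) - H$i$j) *v v = 0"
    using det_zero_kernel by blast
  have Hv: "(\<Sum>j\<in>UNIV. H$i$j * v$j) = z * v$i" for i
  proof -
    have "0 = (\<Sum>j\<in>UNIV. ((if i = j then z else 0) - H$i$j) * v$j)"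
      using arg_cong[OF kv, of "\<lambda>x. x$i"] by (simp add: matrix_vector_mult_def)
    also have "\<dots> = z * v$i - (\<Sum>j\<in>UNIV. H$i$j * v$j)"
    proof -
      have "((if i = j then z else 0) - H$i$j) * v$j = (if i = j then z * v$j else 0) - H$i$j * v$j" for j
        by (auto simp: left_diff_distrib)
      then show ?thesis by (simp add: sum_subtractf)
    qed
    finally show ?thesis by simp
  qed
  define w where "w l = (\<Sum>j\<in>UNIV. cnj (A$j$l) * v$j)" for l
  have "(\<Sum>i\<in>UNIV. cnj (v$i) * (z * v$i)) = (\<Sum>i\<in>UNIV. cnj (v$i) * (\<Sum>j\<in>UNIV. H$i$j * v$j))"
    using Hv by simp
  also have "\<dots> = (\<Sum>i\<in>UNIV. \<Sum>j\<in>UNIV. \<Sum>l\<in>UNIV. cnj (v$i) * A$i$l * cnj (A$j$l) * v$j)"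
  proof -
    have He: "H$i$j = (\<Sum>l\<in>UNIV. A$i$l * cnj (A$j$l))" for i j
      unfolding H_def by (simp add: matrix_matrix_mult_def conj_transpose_def)
    show ?thesis unfolding He by (simp add: sum_distrib_left sum_distrib_right mult.assoc)
  qed
  also have "\<dots> = (\<Sum>i\<in>UNIV. \<Sum>l\<in>UNIV. \<Sum>j\<in>UNIV. cnj (v$i) * A$i$l * cnj (A$j$l) * v$j)"
    by (rule sum.cong[OF refl], rule sum.swap)
  also have "\<dots> = (\<Sum>l\<in>UNIV. \<Sum>i\<in>UNIV. \<Sum>j\<in>UNIV. cnj (v$i) * A$i$l * cnj (A$j$l) * v$j)"
    by (rule sum.swap)
  also have "\<dots> = (\<Sum>l\<in>UNIV. cnj (w l) * w l)"
  proof (rule sum.cong[OF refl])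
    fix l
    have "cnj (w l) * w l = (\<Sum>i\<in>UNIV. A$i$l * cnj (v$i)) * (\<Sum>j\<in>UNIV. cnj (A$j$l) * v$j)"
      unfolding w_def by (simp add: cnj_sum)
    also have "\<dots> = (\<Sum>i\<in>UNIV. \<Sum>j\<in>UNIV. (A$i$l * cnj (v$i)) * (cnj (A$j$l) * v$j))"
      by (rule sum_product)
    also have "\<dots> = (\<Sum>i\<in>UNIV. \<Sum>j\<in>UNIV. cnj (v$i) * A$i$l * cnj (A$j$l) * v$j)"
      by (intro sum.cong refl) (simp only: mult.assoc mult.left_commute)
    finally show "(\<Sum>i\<in>UNIV. \<Sum>j\<in>UNIV. cnj (v$i) * A$i$l * cnj (A$j$l) * v$j) = cnj (w l) * w l" by simp
  qed
  finally have eq: "z * (\<Sum>i\<in>UNIV. cnj (v$i) * v$i) = (\<Sum>l\<in>UNIV. cnj (w l) * w l)"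
    by (simp add: sum_distrib_left mult.left_commute)
  have r1: "(\<Sum>i\<in>UNIV. cnj (v$i) * v$i) = of_real (\<Sum>i\<in>UNIV. (cmod (v$i))^2)"
    by (simp only: of_real_sum complex_norm_square mult.commute)
  have r2: "(\<Sum>l\<in>UNIV. cnj (w l) * w l) = of_real (\<Sum>l\<in>UNIV. (cmod (w l))^2)"
    by (simp only: of_real_sum complex_norm_square mult.commute)
  obtain i where "v$i \<noteq> 0" using v by (metis vec_eq_iff zero_index)
  then have pos: "(\<Sum>i\<in>UNIV. (cmod (v$i))^2) > 0"
    by (intro sum_pos2[where i=i]) auto
  have "Im (z * of_real (\<Sum>i\<in>UNIV. (cmod (v$i))^2)) = 0"
    using eq r1 r2 by simp
  then show ?thesis using pos by simp
qed

definition gram :: "complex^'m::finite^'n::finite \<Rightarrow> complex^'n^'n" where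
  "gram A = A ** conj_transpose A"

definition eiglist :: "complex^'n::finite^'n \<Rightarrow> real list" where
  "eiglist H = rev (sorted_list_of_multiset (image_mset Re (eigvals_mset H)))"

lemma gram_entry: "gram B $ i $ j = (\<Sum>l\<in>UNIV. B$i$l * cnj (B$j$l))"
  unfolding gram_def by (simp add: matrix_matrix_mult_def conj_transpose_def)

lemma char_tendsto:
  fixes X :: "nat \<Rightarrow> complex^'m::finite^'n::finite"
  assumes "X \<longlonglongrightarrow> A"
  shows "(\<lambda>k. poly (char_polyc (gram (X k))) z) \<longlonglongrightarrow> poly (char_polyc (gram A)) z"
  unfolding poly_char det_def
  by (simp add: gram_entry, intro tendsto_intros assms)

lemma eig_props:
  fixes A :: "complex^'m::finite^'n::finite"
  shows "length (eiglist (gram A)) = CARD('n)"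
    and "poly (char_polyc (gram A)) z = (\<Prod>i\<in>{0..<CARD('n)}. z - of_real (eiglist (gram A) ! i))"
    and "sorted (rev (eiglist (gram A)))"
proof -
  define p where "p = char_polyc (gram A)"
  define R where "R = proots p"
  have dp: "degree p = CARD('n)" and lp: "lead_coeff p = 1" using char_monic p_def by auto
  have sR: "size R = CARD('n)" unfolding R_def using dp size_proots_complex by simp
  have pR: "p = (\<Prod>x\<in>#R. [:-x, 1:])"
    using complex_poly_decompose_multiset[of p] lp unfolding R_def by simp
  have realR: "x = of_real (Re x)" if "x \<in># R" for x
  proof -
    have "p \<noteq> 0" using lp by auto
    then have "poly p x = 0" using that unfolding R_def by simp
    then have "Im x = 0" using eig_real unfolding p_def gram_def by blast
    then show ?thesis by (simp add: complex_eq_iff)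
  qed
  have RR: "R = image_mset of_real (image_mset Re R)"
    using realR by (simp add: multiset.map_comp o_def) (metis (no_types, lifting) image_mset_cong multiset.map_ident)
  have L: "eiglist (gram A) = rev (sorted_list_of_multiset (image_mset Re R))"
    unfolding eiglist_def eigvals_mset_def R_def p_def ..
  have mL: "mset (eiglist (gram A)) = image_mset Re R" unfolding L by simp
  show "length (eiglist (gram A)) = CARD('n)"
    using arg_cong[OF mL, of size] sR by simp
  show "sorted (rev (eiglist (gram A)))" unfolding L by simp
  have "poly p z = (\<Prod>x\<in>#R. z - x)"
    by (subst pR) (simp add: poly_prod_mset multiset.map_comp o_def)
  also have "\<dots> = (\<Prod>y\<in># image_mset Re R. z - of_real y)"
    by (subst RR) (simp add: multiset.map_comp o_def)
  also have "\<dots> = (\<Prod>y\<in># mset (eiglist (gram A)). z - of_real y)" unfolding mL ..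
  also have "\<dots> = prod_list (map (\<lambda>y. z - of_real y) (eiglist (gram A)))"
    by (metis mset_map prod_mset_prod_list)
  also have "\<dots> = (\<Prod>i\<in>{0..<length (eiglist (gram A))}. z - of_real (eiglist (gram A) ! i))"
    by (simp add: prod.list_conv_set_nth)
  finally show "poly (char_polyc (gram A)) z = (\<Prod>i\<in>{0..<CARD('n)}. z - of_real (eiglist (gram A) ! i))"
    using arg_cong[OF mL, of size] sR unfolding p_def by simp
qed

lemma common_subseq:
  fixes f :: "nat \<Rightarrow> nat \<Rightarrow> real"
  assumes "\<And>i. i < N \<Longrightarrow> bounded (range (\<lambda>k. f k i))"
  shows "\<exists>s \<mu>. strict_mono s \<and> (\<forall>i<N. (\<lambda>k. f (s k) i) \<longlonglongrightarrow> \<mu> i)"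
  using assms
proof (induction N)
  case 0
  show ?case by (intro exI[of _ id]) (auto simp: strict_mono_def)
next
  case (Suc N)
  then obtain s \<mu> where s: "strict_mono s" and lim: "\<forall>i<N. (\<lambda>k. f (s k) i) \<longlonglongrightarrow> \<mu> i"
    by auto
  have "bounded (range (\<lambda>k. f (s k) N))"
    by (rule bounded_subset[OF Suc.prems[of N]]) auto
  then obtain l r where r: "strict_mono r" and lr: "((\<lambda>k. f (s k) N) \<circ> r) \<longlonglongrightarrow> l"
    using bounded_imp_convergent_subsequence by blast
  show ?case
  proof (intro exI[of _ "s \<circ> r"] exI[of _ "\<mu>(N := l)"] conjI allI impI)
    show "strict_mono (s \<circ> r)" using s r by (rule strict_mono_o)
    fix i assume "i < Suc N"
    show "(\<lambda>k. f ((s \<circ> r) k) i) \<longlonglongrightarrow> (\<mu>(N := l)) i"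
    proof (cases "i = N")
      case True then show ?thesis using lr by (simp add: o_def)
    next
      case False
      then have "i < N" using \<open>i < Suc N\<close> by simp
      then have "((\<lambda>k. f (s k) i) \<circ> r) \<longlonglongrightarrow> \<mu> i" using lim r LIMSEQ_subseq_LIMSEQ by blast
      then show ?thesis using False by (simp add: o_def)
    qed
  qed
qed

lemma mset_sum_upt: "(\<Sum>i\<in>{0..<N}. {#\<mu> i#}) = mset (map \<mu> [0..<N])"
  by (induction N) (auto simp: add.commute)

lemma eig_unique:
  fixes A :: "complex^'m::finite^'n::finite"
  assumes pz: "\<And>z. poly (char_polyc (gram A)) z = (\<Prod>i\<in>{0..<CARD('n)}. z - of_real (\<mu> i))"
    and mono: "\<And>i j. i \<le> j \<Longrightarrow> j < CARD('n) \<Longrightarrow> \<mu> j \<le> \<mu> i"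
    and i: "i < CARD('n)"
  shows "eiglist (gram A) ! i = \<mu> i"
proof -
  define N where "N = CARD('n)"
  define q where "q = (\<Prod>i\<in>{0..<N}. [:- of_real (\<mu> i), 1:] :: complex poly)"
  have "poly (char_polyc (gram A)) = poly q"
    unfolding q_def N_def by (rule ext) (simp add: pz poly_prod)
  then have pq: "char_polyc (gram A) = q" by (simp add: poly_eq_poly_eq_iff)
  have "proots q = (\<Sum>i\<in>{0..<N}. {#of_real (\<mu> i)#})"
    unfolding q_def by (subst proots_prod) auto
  moreover have "image_mset Re (\<Sum>i\<in>{0..<N'}. {#of_real (\<mu> i)#}) = (\<Sum>i\<in>{0..<N'}. {#\<mu> i#})" for N'
    by (induction N') auto
  ultimately have "image_mset Re (proots q) = (\<Sum>i\<in>{0..<N}. {#\<mu> i#})"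
    by simp
  then have m: "image_mset Re (eigvals_mset (gram A)) = mset (map \<mu> [0..<N])"
    unfolding eigvals_mset_def pq mset_sum_upt .
  have srt: "sorted (rev (map \<mu> [0..<N]))"
    unfolding sorted_rev_iff_nth_mono using mono N_def by auto
  have "sort (map \<mu> [0..<N]) = rev (map \<mu> [0..<N])"
    by (rule properties_for_sort) (use srt in auto)
  then have "eiglist (gram A) = map \<mu> [0..<N]"
    unfolding eiglist_def m sorted_list_of_multiset_mset by simp
  then show ?thesis using i N_def by simp
qed

lemma cmod_i_minus:
  fixes t :: real
  shows "1 \<le> cmod (\<i> - of_real t)" and "\<bar>t\<bar> \<le> cmod (\<i> - of_real t)"
proof -
  have e: "cmod (\<i> - of_real t) = sqrt (t\<^sup>2 + 1)" by (simp add: cmod_def)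
  show "1 \<le> cmod (\<i> - of_real t)" unfolding e by (rule real_le_rsqrt) simp
  show "\<bar>t\<bar> \<le> cmod (\<i> - of_real t)" unfolding e by (rule real_le_rsqrt) simp
qed

lemma prod_ge_factor:
  fixes a :: "'a \<Rightarrow> real"
  assumes "finite I" "i \<in> I" "\<And>j. j \<in> I \<Longrightarrow> 1 \<le> a j"
  shows "a i \<le> prod a I"
proof -
  have "prod a I = a i * prod a (I - {i})" using assms by (simp add: prod.remove)
  moreover have "1 \<le> prod a (I - {i})" using assms by (intro prod_ge_1) auto
  moreover have "0 \<le> a i" using assms(3)[OF assms(2)] by simp
  ultimately show ?thesis by (simp add: mult_le_cancel_left1)
qed

lemma eig_subseq:
  fixes X :: "nat \<Rightarrow> complex^'m::finite^'n::finite"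
  assumes X: "X \<longlonglongrightarrow> A"
  shows "\<exists>s. strict_mono s \<and> (\<forall>i<CARD('n). (\<lambda>k. eiglist (gram (X (s k))) ! i) \<longlonglongrightarrow> eiglist (gram A) ! i)"
proof -
  define N where "N = CARD('n)"
  define f where "f k i = eiglist (gram (X k)) ! i" for k i
  have "bounded (range (\<lambda>k. poly (char_polyc (gram (X k))) \<i>))"
    by (rule convergent_imp_bounded[OF char_tendsto[OF X]])
  then obtain B where B: "\<And>k. norm (poly (char_polyc (gram (X k))) \<i>) \<le> B"
    unfolding bounded_iff by auto
  have bd: "bounded (range (\<lambda>k. f k i))" if "i < N" for i
  proof -
    have "\<bar>f k i\<bar> \<le> B" for k
    proof -
      have "\<bar>f k i\<bar> \<le> cmod (\<i> - of_real (f k i))" by (rule cmod_i_minus(2))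
      also have "\<dots> \<le> (\<Prod>j\<in>{0..<N}. cmod (\<i> - of_real (f k j)))"
        by (rule prod_ge_factor[where a="\<lambda>j. cmod (\<i> - of_real (f k j))"]) (use that cmod_i_minus(1) in auto)
      also have "\<dots> = norm (poly (char_polyc (gram (X k))) \<i>)"
        unfolding eig_props(2) f_def N_def by (simp add: prod_norm)
      also have "\<dots> \<le> B" by (rule B)
      finally show ?thesis .
    qed
    then show ?thesis unfolding bounded_iff by auto
  qed
  obtain s \<mu> where s: "strict_mono s" and lim: "\<forall>i<N. (\<lambda>k. f (s k) i) \<longlonglongrightarrow> \<mu> i"
    using common_subseq[of N f, OF bd] by blast
  have pz: "poly (char_polyc (gram A)) z = (\<Prod>i\<in>{0..<CARD('n)}. z - of_real (\<mu> i))" for z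
  proof -
    have "((\<lambda>k. poly (char_polyc (gram (X k))) z) \<circ> s) \<longlonglongrightarrow> poly (char_polyc (gram A)) z"
      using LIMSEQ_subseq_LIMSEQ[OF char_tendsto[OF X] s] .
    moreover have "((\<lambda>k. poly (char_polyc (gram (X k))) z) \<circ> s) \<longlonglongrightarrow> (\<Prod>i\<in>{0..<CARD('n)}. z - of_real (\<mu> i))"
    proof -
      have "(\<lambda>k. \<Prod>i\<in>{0..<CARD('n)}. z - of_real (f (s k) i)) \<longlonglongrightarrow> (\<Prod>i\<in>{0..<CARD('n)}. z - of_real (\<mu> i))"
        using lim N_def by (intro tendsto_intros) auto
      then show ?thesis unfolding o_def f_def eig_props(2) .
    qed
    ultimately show ?thesis using LIMSEQ_unique by blast
  qed
  have mono: "\<mu> j \<le> \<mu> i" if "i \<le> j" "j < CARD('n)" for i j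
  proof (rule LIMSEQ_le)
    show "(\<lambda>k. f (s k) j) \<longlonglongrightarrow> \<mu> j" "(\<lambda>k. f (s k) i) \<longlonglongrightarrow> \<mu> i" using lim that N_def by auto
    show "\<exists>N. \<forall>n\<ge>N. f (s n) j \<le> f (s n) i"
      using eig_props(1,3)[of "X _"] that unfolding f_def sorted_rev_iff_nth_mono by auto
  qed
  show ?thesis
  proof (intro exI[of _ s] conjI allI impI s)
    fix i assume "i < CARD('n)"
    then show "(\<lambda>k. eiglist (gram (X (s k))) ! i) \<longlonglongrightarrow> eiglist (gram A) ! i"
      using lim eig_unique[OF pz mono] N_def unfolding f_def by auto
  qed
qed

lemma schmidt_eq:
  fixes A :: "complex^'m::finite^'n::finite"
  assumes "1 \<le> j" "j \<le> min CARD('n) CARD('m)"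
  shows "schmidt A j = sqrt (eiglist (gram A) ! (j - 1))"
proof -
  have l: "length (eiglist (gram A)) = CARD('n)" by (rule eig_props(1))
  define L where "L = eiglist (gram A)"
  have "j - 1 < min CARD('n) CARD('m)" "j - 1 < length L" using assms l unfolding L_def by auto
  then have "map sqrt (take (min CARD('n) CARD('m)) L) ! (j - 1) = sqrt (L ! (j - 1))"
    by (simp add: nth_take)
  then show ?thesis
    unfolding schmidt_def schmidt_coeffs_def L_def eiglist_def gram_def .
qed

lemma schmidt_subseq:
  fixes X :: "nat \<Rightarrow> complex^'m::finite^'n::finite"
  assumes X: "X \<longlonglongrightarrow> A"
  shows "\<exists>s. strict_mono s \<and> (\<forall>j. 1 \<le> j \<and> j \<le> min CARD('n) CARD('m) \<longrightarrow>
            (\<lambda>k. schmidt (X (s k)) j) \<longlonglongrightarrow> schmidt A j)"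
proof -
  obtain s where s: "strict_mono s"
    and lim: "\<forall>i<CARD('n). (\<lambda>k. eiglist (gram (X (s k))) ! i) \<longlonglongrightarrow> eiglist (gram A) ! i"
    using eig_subseq[OF X] by blast
  show ?thesis
  proof (intro exI[of _ s] conjI allI impI s)
    fix j assume j: "1 \<le> j \<and> j \<le> min CARD('n) CARD('m)"
    then have "j - 1 < CARD('n)" by auto
    then have "(\<lambda>k. sqrt (eiglist (gram (X (s k))) ! (j - 1))) \<longlonglongrightarrow> sqrt (eiglist (gram A) ! (j - 1))"
      using lim by (intro tendsto_intros) auto
    then show "(\<lambda>k. schmidt (X (s k)) j) \<longlonglongrightarrow> schmidt A j"
      using j by (simp add: schmidt_eq)
  qed
qed

lemma closed_V:
  assumes "\<alpha> \<le> real (min CARD('n::finite) CARD('m::finite))"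
  shows "closed (V_set \<alpha> :: (complex^'m^'n) set)"
  unfolding closed_sequential_limits
proof (intro allI impI, elim conjE)
  fix X :: "nat \<Rightarrow> complex^'m^'n" and A
  assume XV: "\<forall>n. X n \<in> V_set \<alpha>" and X: "X \<longlonglongrightarrow> A"
  define k where "k = nat \<lfloor>\<alpha>\<rfloor>"
  define \<theta> where "\<theta> = \<alpha> - real k"
  define r where "r = nat \<lceil>\<alpha>\<rceil>"
  define d where "d = min CARD('n) CARD('m)"
  have adm: "norm (X n) = 1" "\<And>j. r + 1 \<le> j \<Longrightarrow> j \<le> d \<Longrightarrow> schmidt (X n) j = 0"
     "\<theta> > 0 \<Longrightarrow> schmidt (X n) (k + 1) \<le> \<theta> / real k * (\<Sum>j = 1..k. schmidt (X n) j)" for n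
    using XV unfolding V_set_def admissible_def Let_def k_def \<theta>_def r_def d_def by auto
  obtain s where s: "strict_mono s" and lim: "\<And>j. 1 \<le> j \<Longrightarrow> j \<le> d \<Longrightarrow> (\<lambda>k. schmidt (X (s k)) j) \<longlonglongrightarrow> schmidt A j"
    using schmidt_subseq[OF X] unfolding d_def by blast
  have "norm A = 1"
  proof -
    have "(\<lambda>n. norm (X n)) \<longlonglongrightarrow> norm A" using X by (rule tendsto_norm)
    then have "(\<lambda>n. 1::real) \<longlonglongrightarrow> norm A" using adm(1) by simp
    then show ?thesis using LIMSEQ_const_iff by metis
  qed
  moreover have "schmidt A j = 0" if "r + 1 \<le> j" "j \<le> d" for j
  proof -
    have "(\<lambda>n. schmidt (X (s n)) j) \<longlonglongrightarrow> schmidt A j" using lim that by auto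
    then have "(\<lambda>n. 0::real) \<longlonglongrightarrow> schmidt A j" using adm(2)[OF that] by simp
    then show ?thesis using LIMSEQ_const_iff by metis
  qed
  moreover have "schmidt A (k + 1) \<le> \<theta> / real k * (\<Sum>j = 1..k. schmidt A j)" if "\<theta> > 0"
  proof (rule LIMSEQ_le)
    have "real k < real d" using that assms unfolding \<theta>_def d_def by linarith
    then have kd: "k + 1 \<le> d" by linarith
    show "(\<lambda>n. schmidt (X (s n)) (k + 1)) \<longlonglongrightarrow> schmidt A (k + 1)" using lim kd by auto
    show "(\<lambda>n. \<theta> / real k * (\<Sum>j = 1..k. schmidt (X (s n)) j)) \<longlonglongrightarrow> \<theta> / real k * (\<Sum>j = 1..k. schmidt A j)"
      using lim kd by (intro tendsto_intros) auto
    show "\<exists>N. \<forall>n\<ge>N. schmidt (X (s n)) (k + 1) \<le> \<theta> / real k * (\<Sum>j = 1..k. schmidt (X (s n)) j)"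
      using adm(3)[OF that] by auto
  qed
  ultimately show "A \<in> V_set \<alpha>"
    unfolding V_set_def admissible_def Let_def k_def \<theta>_def r_def d_def by auto
qed

lemma cone_gen_eq:
  fixes S :: "'a::real_vector set"
  shows "cone_gen S = insert 0 (conic hull (convex hull S))"
proof
  show "cone_gen S \<subseteq> insert 0 (conic hull (convex hull S))"
  proof
    fix x assume "x \<in> cone_gen S"
    then obtain F c where F: "finite F" "F \<subseteq> S" "\<forall>v\<in>F. c v \<ge> 0" and x: "x = (\<Sum>v\<in>F. c v *\<^sub>R v)"
      unfolding cone_gen_def by blast
    define t where "t = sum c F"
    show "x \<in> insert 0 (conic hull (convex hull S))"
    proof (cases "t = 0")
      case True
      have "\<forall>v\<in>F. c v = 0" using sum_nonneg_eq_0_iff[of F c] F True unfolding t_def by simp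
      then have "x = 0" using x by simp
      then show ?thesis by simp
    next
      case False
      have "t \<ge> 0" unfolding t_def by (rule sum_nonneg) (use F in simp)
      then have t0: "t > 0" using False by simp
      have y: "(\<Sum>v\<in>F. (c v / t) *\<^sub>R v) \<in> convex hull S"
      proof (rule convex_sum[OF F(1) convex_convex_hull])
        show "(\<Sum>v\<in>F. c v / t) = 1" using t0 unfolding t_def by (simp add: sum_divide_distrib[symmetric])
        show "0 \<le> c i / t" if "i \<in> F" for i
          using F(3) that t0 by (intro divide_nonneg_pos) auto
        show "i \<in> convex hull S" if "i \<in> F" for i
          using F(2) that by (intro hull_inc) blast
      qed
      have xt: "x = t *\<^sub>R (\<Sum>v\<in>F. (c v / t) *\<^sub>R v)"
        using t0 unfolding x by (simp add: scaleR_sum_right)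
      have "x \<in> conic hull (convex hull S)"
        unfolding conic_hull_explicit using y t0 xt by (intro CollectI exI conjI) (auto intro: less_imp_le)
      then show ?thesis by simp
    qed
  qed
  show "insert 0 (conic hull (convex hull S)) \<subseteq> cone_gen S"
  proof
    fix x assume "x \<in> insert 0 (conic hull (convex hull S))"
    then consider "x = 0" | c y where "c \<ge> 0" "y \<in> convex hull S" "x = c *\<^sub>R y"
      unfolding conic_hull_explicit by blast
    then show "x \<in> cone_gen S"
    proof cases
      case 1
      show ?thesis unfolding cone_gen_def
        by (rule CollectI, rule exI[of _ "{}"], rule exI[of _ "\<lambda>_. 0"]) (simp add: 1)
    next
      case 2
      then obtain F u where F: "finite F" "F \<subseteq> S" "\<forall>v\<in>F. 0 \<le> u v" "sum u F = 1" "(\<Sum>v\<in>F. u v *\<^sub>R v) = y"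
        unfolding convex_hull_explicit by blast
      have xs: "x = (\<Sum>v\<in>F. (c * u v) *\<^sub>R v)" unfolding 2(3) F(5)[symmetric] by (simp add: scaleR_sum_right)
      have "\<forall>v\<in>F. 0 \<le> c * u v" using F(3) 2(1) by simp
      then show ?thesis unfolding cone_gen_def
        by (intro CollectI exI[of _ F] exI[of _ "\<lambda>v. c * u v"] conjI F(1) F(2) xs)
    qed
  qed
qed

lemma closed_cone_gen:
  fixes S :: "'a::euclidean_space set"
  assumes "compact S" "0 \<notin> convex hull S"
  shows "closed (cone_gen S)"
  unfolding cone_gen_eq
  by (intro closed_insert closed_conic_hull disjI2 conjI compact_convex_hull assms)

definition tr :: "complex^'k^'k \<Rightarrow> real" where
  "tr P = Re (\<Sum>p\<in>UNIV. P$p$p)"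

lemma norm_sq_mat:
  fixes A :: "complex^'m::finite^'n::finite"
  shows "(norm A)^2 = (\<Sum>i\<in>UNIV. \<Sum>j\<in>UNIV. (cmod (A$i$j))^2)"
  by (simp add: norm_vec_def L2_set_def sum_nonneg)

lemma tr_outer:
  fixes A :: "complex^'m::finite^'n::finite"
  assumes "norm A = 1" shows "tr (outer A) = 1"
proof -
  have "tr (outer A) = (\<Sum>p\<in>UNIV. Re (A $ fst p $ snd p * cnj (A $ fst p $ snd p)))"
    unfolding tr_def outer_def by (simp add: Re_sum)
  also have "\<dots> = (\<Sum>p\<in>UNIV. (cmod (A $ fst p $ snd p))^2)"
    by (simp add: complex_norm_square[symmetric] del: of_real_power)
  also have "\<dots> = (\<Sum>i\<in>UNIV. \<Sum>j\<in>UNIV. (cmod (A$i$j))^2)"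
    by (simp add: UNIV_Times_UNIV[symmetric] sum.cartesian_product case_prod_unfold del: UNIV_Times_UNIV)
  also have "\<dots> = 1" using norm_sq_mat[of A] assms by simp
  finally show ?thesis .
qed

lemma tr_lin: "tr (u *\<^sub>R x + v *\<^sub>R y) = u * tr x + v * tr (y :: complex^'k::finite^'k)"
  unfolding tr_def by (simp add: sum.distrib sum_distrib_left)

lemma convex_tr1: "convex {P :: complex^'k::finite^'k. tr P = 1}"
  unfolding convex_def by (simp add: tr_lin)

lemma adm_norm: "admissible \<alpha> (A :: complex^'m::finite^'n::finite) \<Longrightarrow> norm A = 1"
  unfolding admissible_def Let_def by (elim conjE)

lemma compact_S:
  assumes "\<alpha> \<le> real (min CARD('n::finite) CARD('m::finite))"
  shows "compact (S_set \<alpha> TYPE('n) TYPE('m))"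
proof -
  have "compact (V_set \<alpha> :: (complex^'m^'n) set)"
  proof (rule compact_eq_bounded_closed[THEN iffD2], rule conjI)
    show "bounded (V_set \<alpha> :: (complex^'m^'n) set)"
      by (rule bounded_subset[OF bounded_cball[of 0 1]])
         (auto simp: V_set_def dest: adm_norm)
    show "closed (V_set \<alpha> :: (complex^'m^'n) set)" using closed_V assms by blast
  qed
  moreover have "continuous_on UNIV (outer :: complex^'m^'n \<Rightarrow> _)"
    unfolding outer_def
    by (intro continuous_on_vec_lambda continuous_on_mult bounded_linear.continuous_on[OF bounded_linear_cnj]
        continuous_on_component continuous_on_id)
  ultimately have "compact (outer ` (V_set \<alpha> :: (complex^'m^'n) set))"
    using compact_continuous_image continuous_on_subset by blast
  moreover have "S_set \<alpha> TYPE('n) TYPE('m) = outer ` (V_set \<alpha> :: (complex^'m^'n) set)"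
    unfolding S_set_def by auto
  ultimately show ?thesis by simp
qed

lemma zero_notin_S:
  "0 \<notin> convex hull (S_set \<alpha> TYPE('n::finite) TYPE('m::finite))"
proof -
  have "convex hull (S_set \<alpha> TYPE('n) TYPE('m)) \<subseteq> {P. tr P = 1}"
  proof (rule hull_minimal)
    show "S_set \<alpha> TYPE('n) TYPE('m) \<subseteq> {P. tr P = 1}"
    proof
      fix P assume "P \<in> S_set \<alpha> TYPE('n) TYPE('m)"
      then obtain x :: "complex^'m^'n" where x: "P = outer x" "x \<in> V_set \<alpha>" unfolding S_set_def by blast
      have "norm x = 1" using x(2) adm_norm unfolding V_set_def by blast
      then show "P \<in> {P. tr P = 1}" using x(1) tr_outer by blast
    qed
  qed (rule convex_tr1)
  moreover have "tr 0 \<noteq> 1" by (simp add: tr_def)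
  ultimately show ?thesis by blast
qed

theorem corollary3p6:
  fixes \<alpha> :: real
  assumes "1 \<le> \<alpha>" and "\<alpha> \<le> real (min CARD('n::finite) CARD('m::finite))"
  shows "K_set \<alpha> TYPE('n) TYPE('m) = cone_gen (S_set \<alpha> TYPE('n) TYPE('m))"
  unfolding K_set_def
  by (rule closure_closed, rule closed_cone_gen[OF compact_S[OF assms(2)] zero_notin_S])

end
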